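(* Let $\Phi_o$ be a $\mathrm{Spin}(7)$-structure on an oriented $8$-manifold with metric $g_o$, let $v,w$ be vector fields, and let $\sigma_7 = v^\flat\wedge(w\lrcorner\Phi_o) - w^\flat\wedge(v\lrcorner\Phi_o)$, $\tilde\Phi = \Phi_o + \sigma_7$. Then \[ \tilde\Phi\wedge\tilde\Phi = \left(1+\tfrac47|v\wedge w|_o^2\right)\Phi_o\wedge\Phi_o . \]
   Context: A $\mathrm{Spin}(7)$-structure on an oriented $8$-manifold $M$ is a $4$-form $\Phi$ such that at each point $p$ there are local coordinates $x^0,\dots,x^7$ with $\Phi_p = dx^{0123} - dx^{0167} - dx^{0527} - dx^{0563} + dx^{0415} + dx^{0426} + dx^{0437} + dx^{4567} - dx^{4523} - dx^{4163} - dx^{4127} + dx^{2637} + dx^{1537} + dx^{1526}$. It determines a Riemannian metric (equal to $\sum_k dx^k\otimes dx^k$ at $p$), orientation, volume form and Hodge star; $\Phi\wedge\Phi=14\,\mathrm{vol}$. $v^\flat=g_o(v,\cdot)$, and $|v\wedge w|_o^2 = |v|_o^2|w|_o^2 - g_o(v,w)^2$. *)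

theory Defs
  imports Complex_Main
begin

text \<open>Pointwise exterior algebra of R^8 with orthonormal coordinates x^0,...,x^7.
  A form is represented by its coefficient function on index sets:
  alpha K is the coefficient of dx^K, where dx^K = dx^{k1} ^ ... ^ dx^{kr}
  for K = {k1 < ... < kr} a subset of {0..7}. Vectors are v :: nat => real,
  with components v 0, ..., v 7 (other values are never used).\<close>

type_synonym form = "nat set \<Rightarrow> real"

definition dim8 :: "nat set" where "dim8 = {0..<8}"

definition wedge_sign :: "nat set \<Rightarrow> nat set \<Rightarrow> real" where
  "wedge_sign I J = (-1) ^ card {(i,j). i \<in> I \<and> j \<in> J \<and> j < i}"

definition wedge :: "form \<Rightarrow> form \<Rightarrow> form" where
  "wedge \<alpha> \<beta> = (\<lambda>K. \<Sum>I\<in>Pow K. wedge_sign I (K - I) * \<alpha> I * \<beta> (K - I))"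

definition form_add :: "form \<Rightarrow> form \<Rightarrow> form" where
  "form_add \<alpha> \<beta> = (\<lambda>K. \<alpha> K + \<beta> K)"

definition form_diff :: "form \<Rightarrow> form \<Rightarrow> form" where
  "form_diff \<alpha> \<beta> = (\<lambda>K. \<alpha> K - \<beta> K)"

definition form_scale :: "real \<Rightarrow> form \<Rightarrow> form" where
  "form_scale c \<alpha> = (\<lambda>K. c * \<alpha> K)"

definition dx1 :: "nat \<Rightarrow> form" where
  "dx1 i = (\<lambda>K. if K = {i} then 1 else 0)"

fun dxl :: "nat list \<Rightarrow> form" where
  "dxl [] = (\<lambda>K. if K = {} then 1 else 0)"
| "dxl (i # is) = wedge (dx1 i) (dxl is)"

definition interior :: "(nat \<Rightarrow> real) \<Rightarrow> form \<Rightarrow> form" where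
  "interior v \<alpha> = (\<lambda>J. \<Sum>i\<in>dim8 - J. v i * (-1) ^ card {j\<in>J. j < i} * \<alpha> (insert i J))"

definition flat :: "(nat \<Rightarrow> real) \<Rightarrow> form" where
  "flat v = (\<lambda>K. \<Sum>i\<in>dim8. if K = {i} then v i else 0)"

definition g_o :: "(nat \<Rightarrow> real) \<Rightarrow> (nat \<Rightarrow> real) \<Rightarrow> real" where
  "g_o v w = (\<Sum>i\<in>dim8. v i * w i)"

definition norm_wedge_sq :: "(nat \<Rightarrow> real) \<Rightarrow> (nat \<Rightarrow> real) \<Rightarrow> real" where
  "norm_wedge_sq v w = g_o v v * g_o w w - (g_o v w)^2"

text \<open>The standard Spin(7) 4-form Phi_o (in the adapted coordinates at a point).\<close>
definition Phi_o :: form where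
  "Phi_o = (\<lambda>K.
      dxl [0,1,2,3] K - dxl [0,1,6,7] K - dxl [0,5,2,7] K - dxl [0,5,6,3] K
    + dxl [0,4,1,5] K + dxl [0,4,2,6] K + dxl [0,4,3,7] K + dxl [4,5,6,7] K
    - dxl [4,5,2,3] K - dxl [4,1,6,3] K - dxl [4,1,2,7] K + dxl [2,6,3,7] K
    + dxl [1,5,3,7] K + dxl [1,5,2,6] K)"

definition sigma7 :: "(nat \<Rightarrow> real) \<Rightarrow> (nat \<Rightarrow> real) \<Rightarrow> form" where
  "sigma7 v w = form_diff (wedge (flat v) (interior w Phi_o)) (wedge (flat w) (interior v Phi_o))"

end

theory Submission
  imports Defs
begin


lemma wedge_sign_eq:
  assumes "finite I" "finite J"
  shows "wedge_sign I J = (-1) ^ (\<Sum>i\<in>I. card (J \<inter> {..<i}))"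
proof -
  have "{(i,j). i \<in> I \<and> j \<in> J \<and> j < i} = Sigma I (\<lambda>i. J \<inter> {..<i})" by auto
  then have "card {(i,j). i \<in> I \<and> j \<in> J \<and> j < i} = (\<Sum>i\<in>I. card (J \<inter> {..<i}))"
    using assms by (simp add: card_SigmaI)
  then show ?thesis unfolding wedge_sign_def by simp
qed

lemma wedge_flat:
  assumes "finite K"
  shows "wedge (flat v) \<beta> K = (\<Sum>i\<in>dim8 \<inter> K. v i * (-1) ^ card ((K - {i}) \<inter> {..<i}) * \<beta> (K - {i}))"
proof -
  have "wedge (flat v) \<beta> K = (\<Sum>I\<in>Pow K. \<Sum>i\<in>dim8. if I = {i} then wedge_sign {i} (K - {i}) * v i * \<beta> (K - {i}) else 0)"
    unfolding wedge_def flat_def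
    by (auto simp: sum_distrib_left sum_distrib_right intro!: sum.cong)
  also have "\<dots> = (\<Sum>i\<in>dim8. \<Sum>I\<in>Pow K. if I = {i} then wedge_sign {i} (K - {i}) * v i * \<beta> (K - {i}) else 0)"
    by (rule sum.swap)
  also have "\<dots> = (\<Sum>i\<in>dim8. if i \<in> K then wedge_sign {i} (K - {i}) * v i * \<beta> (K - {i}) else 0)"
    using assms by (intro sum.cong refl) (simp add: sum.delta)
  also have "\<dots> = (\<Sum>i\<in>dim8 \<inter> K. wedge_sign {i} (K - {i}) * v i * \<beta> (K - {i}))"
    by (simp add: sum.inter_restrict dim8_def)
  also have "\<dots> = (\<Sum>i\<in>dim8 \<inter> K. v i * (-1) ^ card ((K - {i}) \<inter> {..<i}) * \<beta> (K - {i}))"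
    using assms by (intro sum.cong) (auto simp: wedge_sign_eq)
  finally show ?thesis .
qed

lemma dx1_flat:
  assumes "i < 8" shows "dx1 i = flat (\<lambda>j. if j = i then 1 else 0)"
proof
  fix K
  have "flat (\<lambda>j. if j = i then 1 else 0) K = (\<Sum>j\<in>dim8. if j = i then (if K = {i} then 1 else 0) else 0)"
    unfolding flat_def by (intro sum.cong) auto
  also have "\<dots> = (if K = {i} then 1 else 0)" using assms by (simp add: dim8_def)
  finally show "dx1 i K = flat (\<lambda>j. if j = i then 1 else 0) K" by (simp add: dx1_def)
qed

lemma dxl_cons:
  assumes "i < 8" "finite K"
  shows "dxl (i # is) K = (if i \<in> K then (-1) ^ card ((K - {i}) \<inter> {..<i}) * dxl is (K - {i}) else 0)"
proof -
  have "dxl (i # is) K = (\<Sum>j\<in>dim8 \<inter> K. (if j = i then 1 else 0) * (-1) ^ card ((K - {j}) \<inter> {..<j}) * dxl is (K - {j}))"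
    using assms by (simp add: dx1_flat wedge_flat)
  also have "\<dots> = (\<Sum>j\<in>dim8 \<inter> K. if j = i then (-1) ^ card ((K - {i}) \<inter> {..<i}) * dxl is (K - {i}) else 0)"
    by (intro sum.cong) auto
  also have "\<dots> = (if i \<in> K then (-1) ^ card ((K - {i}) \<inter> {..<i}) * dxl is (K - {i}) else 0)"
    using assms by (simp add: dim8_def)
  finally show ?thesis .
qed

definition sup4 :: "form \<Rightarrow> nat \<Rightarrow> bool" where
  "sup4 \<alpha> n \<longleftrightarrow> (\<forall>I. \<alpha> I \<noteq> 0 \<longrightarrow> I \<subseteq> dim8 \<and> card I = n)"

lemma sup4_alt: "sup4 \<alpha> n \<longleftrightarrow> (\<forall>I. \<not> (I \<subseteq> dim8 \<and> card I = n) \<longrightarrow> \<alpha> I = 0)"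
  unfolding sup4_def by blast

lemma finite_dim8[simp]: "finite dim8" by (simp add: dim8_def)
lemma card_dim8: "card dim8 = 8" by (simp add: dim8_def)

lemma sup4_wedge:
  assumes a: "sup4 \<alpha> a" and b: "sup4 \<beta> b"
  shows "sup4 (wedge \<alpha> \<beta>) (a + b)"
  unfolding sup4_def
proof (intro allI impI)
  fix K assume nz: "wedge \<alpha> \<beta> K \<noteq> 0"
  have fin: "finite K"
  proof (rule ccontr)
    assume "infinite K" then have "infinite (Pow K)" by simp
    then show False using nz by (simp add: wedge_def)
  qed
  from nz obtain I where I: "I \<in> Pow K" "\<alpha> I \<noteq> 0" "\<beta> (K - I) \<noteq> 0"
    unfolding wedge_def by (metis (no_types, lifting) mult_eq_0_iff sum.neutral)
  have 1: "I \<subseteq> dim8" "card I = a" using a I unfolding sup4_def by auto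
  have 2: "K - I \<subseteq> dim8" "card (K - I) = b" using b I unfolding sup4_def by auto
  have "K \<subseteq> dim8" using 1 2 by auto
  moreover have "card K = a + b"
  proof -
    have "K = I \<union> (K - I)" using I by auto
    then have "card K = card I + card (K - I)"
      using fin I by (metis Diff_disjoint card_Un_disjoint finite_Diff finite_subset PowD)
    then show ?thesis using 1 2 by simp
  qed
  ultimately show "K \<subseteq> dim8 \<and> card K = a + b" by simp
qed

lemma sup4_dx1: "i < 8 \<Longrightarrow> sup4 (dx1 i) 1"
  unfolding sup4_alt dx1_def dim8_def by auto

lemma sup4_dxl: "\<forall>i\<in>set l. i < 8 \<Longrightarrow> sup4 (dxl l) (length l)"
proof (induction l)
  case Nil then show ?case by (simp add: sup4_def)
next
  case (Cons i l)
  then show ?case using sup4_wedge[OF sup4_dx1[of i], of "dxl l" "length l"] by simp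
qed

lemma sup4_Phi: "sup4 Phi_o 4"
proof -
  have h: "\<And>l. \<forall>i\<in>set l. i < 8 \<Longrightarrow> length l = 4 \<Longrightarrow> \<not> (I \<subseteq> dim8 \<and> card I = 4) \<Longrightarrow> dxl l I = 0" for I
    using sup4_dxl unfolding sup4_def by metis
  show ?thesis unfolding sup4_alt
  proof (intro allI impI)
    fix I assume n: "\<not> (I \<subseteq> dim8 \<and> card I = 4)"
    show "Phi_o I = 0" unfolding Phi_o_def using h[OF _ _ n] by (simp del: dxl.simps)
  qed
qed

lemma sup4_flat: "sup4 (flat v) 1"
  unfolding sup4_alt
proof (intro allI impI)
  fix I assume n: "\<not> (I \<subseteq> dim8 \<and> card I = 1)"
  have "\<And>i. i \<in> dim8 \<Longrightarrow> I \<noteq> {i}" using n by auto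
  then show "flat v I = 0" unfolding flat_def by (intro sum.neutral) auto
qed

lemma sup4_interior:
  assumes "sup4 \<alpha> (Suc n)" shows "sup4 (interior v \<alpha>) n"
  unfolding sup4_alt
proof (intro allI impI)
  fix J assume n: "\<not> (J \<subseteq> dim8 \<and> card J = n)"
  have z: "\<alpha> (insert i J) = 0" if "i \<in> dim8 - J" for i
  proof -
    have "\<not> (insert i J \<subseteq> dim8 \<and> card (insert i J) = Suc n)"
    proof
      assume h: "insert i J \<subseteq> dim8 \<and> card (insert i J) = Suc n"
      then have "finite (insert i J)" using finite_subset[OF _ finite_dim8] by blast
      then have "finite J" by simp
      moreover have "i \<notin> J" using that by blast
      ultimately have "card J = n" using h by simp
      then show False using h n by blast
    qed
    then show ?thesis using assms unfolding sup4_alt by simp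
  qed
  show "interior v \<alpha> J = 0" unfolding interior_def
    by (rule sum.neutral) (metis z mult_zero_right)
qed

lemma sup4_diff: "sup4 \<alpha> n \<Longrightarrow> sup4 \<beta> n \<Longrightarrow> sup4 (form_diff \<alpha> \<beta>) n"
  unfolding sup4_alt form_diff_def by auto
lemma sup4_add: "sup4 \<alpha> n \<Longrightarrow> sup4 \<beta> n \<Longrightarrow> sup4 (form_add \<alpha> \<beta>) n"
  unfolding sup4_alt form_add_def by auto

lemma sup4_alpha: "sup4 (form_add Phi_o (sigma7 v w)) 4"
proof -
  have "sup4 (interior w Phi_o) 3" "sup4 (interior v Phi_o) 3"
    using sup4_interior[of Phi_o 3] sup4_Phi by auto
  then have "sup4 (wedge (flat v) (interior w Phi_o)) (1+3)" "sup4 (wedge (flat w) (interior v Phi_o)) (1+3)"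
    using sup4_wedge sup4_flat by blast+
  then show ?thesis unfolding sigma7_def
    using sup4_add sup4_diff sup4_Phi by simp
qed

definition cs :: "nat set \<Rightarrow> nat list" where
  "cs I = filter (\<lambda>i. i \<in> I) [0,1,2,3,4,5,6,7]"

lemma dim8_lit: "dim8 = {0,1,2,3,4,5,6,7}" by (auto simp: dim8_def)

lemma set_cs: "I \<subseteq> dim8 \<Longrightarrow> set (cs I) = I"
  unfolding cs_def dim8_lit by auto

lemma sup4_cs: "sup4 \<alpha> n \<Longrightarrow> \<alpha> I = (if I \<subseteq> dim8 \<and> card I = n then \<alpha> (set (cs I)) else 0)"
  unfolding sup4_alt using set_cs by auto

definition PhiL :: "nat list \<Rightarrow> real" where "PhiL l = Phi_o (set l)"

lemma Phi_cs: "Phi_o I = (if I \<subseteq> dim8 \<and> card I = 4 then PhiL (cs I) else 0)"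
  unfolding PhiL_def using sup4_cs[OF sup4_Phi] .

lemma Collect_lt: "{j \<in> J. j < (i::nat)} = J \<inter> {..<i}" by auto

lemmas evs = dxl_cons Int_insert_left insert_Diff_if

lemma PhiL_t:
  "PhiL [0,Suc 0,2,3] = 1"
  "PhiL [0,Suc 0,2,4] = 0"
  "PhiL [0,Suc 0,2,5] = 0"
  "PhiL [0,Suc 0,2,6] = 0"
  "PhiL [0,Suc 0,2,7] = 0"
  "PhiL [0,Suc 0,3,4] = 0"
  "PhiL [0,Suc 0,3,5] = 0"
  "PhiL [0,Suc 0,3,6] = 0"
  "PhiL [0,Suc 0,3,7] = 0"
  "PhiL [0,Suc 0,4,5] = (- 1)"
  "PhiL [0,Suc 0,4,6] = 0"
  "PhiL [0,Suc 0,4,7] = 0"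
  "PhiL [0,Suc 0,5,6] = 0"
  "PhiL [0,Suc 0,5,7] = 0"
  "PhiL [0,Suc 0,6,7] = (- 1)"
  "PhiL [0,2,3,4] = 0"
  "PhiL [0,2,3,5] = 0"
  "PhiL [0,2,3,6] = 0"
  "PhiL [0,2,3,7] = 0"
  "PhiL [0,2,4,5] = 0"
  "PhiL [0,2,4,6] = (- 1)"
  "PhiL [0,2,4,7] = 0"
  "PhiL [0,2,5,6] = 0"
  "PhiL [0,2,5,7] = 1"
  "PhiL [0,2,6,7] = 0"
  "PhiL [0,3,4,5] = 0"
  "PhiL [0,3,4,6] = 0"
  "PhiL [0,3,4,7] = (- 1)"
  "PhiL [0,3,5,6] = (- 1)"
  "PhiL [0,3,5,7] = 0"
  "PhiL [0,3,6,7] = 0"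
  "PhiL [0,4,5,6] = 0"
  "PhiL [0,4,5,7] = 0"
  "PhiL [0,4,6,7] = 0"
  "PhiL [0,5,6,7] = 0"
  "PhiL [Suc 0,2,3,4] = 0"
  "PhiL [Suc 0,2,3,5] = 0"
  "PhiL [Suc 0,2,3,6] = 0"
  "PhiL [Suc 0,2,3,7] = 0"
  "PhiL [Suc 0,2,4,5] = 0"
  "PhiL [Suc 0,2,4,6] = 0"
  "PhiL [Suc 0,2,4,7] = (- 1)"
  "PhiL [Suc 0,2,5,6] = (- 1)"
  "PhiL [Suc 0,2,5,7] = 0"
  "PhiL [Suc 0,2,6,7] = 0"
  "PhiL [Suc 0,3,4,5] = 0"
  "PhiL [Suc 0,3,4,6] = 1"
  "PhiL [Suc 0,3,4,7] = 0"
  "PhiL [Suc 0,3,5,6] = 0"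
  "PhiL [Suc 0,3,5,7] = (- 1)"
  "PhiL [Suc 0,3,6,7] = 0"
  "PhiL [Suc 0,4,5,6] = 0"
  "PhiL [Suc 0,4,5,7] = 0"
  "PhiL [Suc 0,4,6,7] = 0"
  "PhiL [Suc 0,5,6,7] = 0"
  "PhiL [2,3,4,5] = (- 1)"
  "PhiL [2,3,4,6] = 0"
  "PhiL [2,3,4,7] = 0"
  "PhiL [2,3,5,6] = 0"
  "PhiL [2,3,5,7] = 0"
  "PhiL [2,3,6,7] = (- 1)"
  "PhiL [2,4,5,6] = 0"
  "PhiL [2,4,5,7] = 0"
  "PhiL [2,4,6,7] = 0"
  "PhiL [2,5,6,7] = 0"
  "PhiL [3,4,5,6] = 0"
  "PhiL [3,4,5,7] = 0"
  "PhiL [3,4,6,7] = 0"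
  "PhiL [3,5,6,7] = 0"
  "PhiL [4,5,6,7] = 1"
  unfolding PhiL_def Phi_o_def by (simp_all del: dxl.simps(2) add: evs)

definition p :: "(nat \<Rightarrow> real) \<Rightarrow> (nat \<Rightarrow> real) \<Rightarrow> nat \<Rightarrow> nat \<Rightarrow> real" where
  "p v w i j = v i * w j - v j * w i"

definition AL :: "(nat \<Rightarrow> real) \<Rightarrow> (nat \<Rightarrow> real) \<Rightarrow> nat list \<Rightarrow> real" where
  "AL v w l = form_add Phi_o (sigma7 v w) (set l)"


lemma interior_alt: "interior v \<alpha> J = (\<Sum>i\<in>dim8 - J. v i * (-1) ^ card (J \<inter> {..<i}) * \<alpha> (insert i J))"
  unfolding interior_def Collect_lt ..


lemma sum_weak_cong: "A = B \<Longrightarrow> sum f A = sum f B" by simp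

lemma AL_t:
  "AL v w [0,Suc 0,2,3] = 1"
  "AL v w [0,Suc 0,2,4] = p v w 0 7 - p v w 1 6 + p v w 2 5 - p v w 3 4"
  "AL v w [0,Suc 0,2,5] = p v w 0 6 + p v w 1 7 - p v w 2 4 - p v w 3 5"
  "AL v w [0,Suc 0,2,6] = - p v w 0 5 + p v w 1 4 + p v w 2 7 - p v w 3 6"
  "AL v w [0,Suc 0,2,7] = - p v w 0 4 - p v w 1 5 - p v w 2 6 - p v w 3 7"
  "AL v w [0,Suc 0,3,4] = - p v w 0 6 - p v w 1 7 + p v w 2 4 + p v w 3 5"
  "AL v w [0,Suc 0,3,5] = p v w 0 7 - p v w 1 6 + p v w 2 5 - p v w 3 4"
  "AL v w [0,Suc 0,3,6] = p v w 0 4 + p v w 1 5 + p v w 2 6 + p v w 3 7"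
  "AL v w [0,Suc 0,3,7] = - p v w 0 5 + p v w 1 4 + p v w 2 7 - p v w 3 6"
  "AL v w [0,Suc 0,4,5] = - 1"
  "AL v w [0,Suc 0,4,6] = - p v w 0 3 - p v w 1 2 + p v w 4 7 + p v w 5 6"
  "AL v w [0,Suc 0,4,7] = p v w 0 2 - p v w 1 3 - p v w 4 6 + p v w 5 7"
  "AL v w [0,Suc 0,5,6] = p v w 0 2 - p v w 1 3 - p v w 4 6 + p v w 5 7"
  "AL v w [0,Suc 0,5,7] = p v w 0 3 + p v w 1 2 - p v w 4 7 - p v w 5 6"
  "AL v w [0,Suc 0,6,7] = - 1"
  "AL v w [0,2,3,4] = p v w 0 5 - p v w 1 4 - p v w 2 7 + p v w 3 6"
  "AL v w [0,2,3,5] = - p v w 0 4 - p v w 1 5 - p v w 2 6 - p v w 3 7"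
  "AL v w [0,2,3,6] = p v w 0 7 - p v w 1 6 + p v w 2 5 - p v w 3 4"
  "AL v w [0,2,3,7] = - p v w 0 6 - p v w 1 7 + p v w 2 4 + p v w 3 5"
  "AL v w [0,2,4,5] = p v w 0 3 + p v w 1 2 - p v w 4 7 - p v w 5 6"
  "AL v w [0,2,4,6] = - 1"
  "AL v w [0,2,4,7] = - p v w 0 1 - p v w 2 3 + p v w 4 5 + p v w 6 7"
  "AL v w [0,2,5,6] = - p v w 0 1 - p v w 2 3 + p v w 4 5 + p v w 6 7"
  "AL v w [0,2,5,7] = 1"
  "AL v w [0,2,6,7] = p v w 0 3 + p v w 1 2 - p v w 4 7 - p v w 5 6"
  "AL v w [0,3,4,5] = - p v w 0 2 + p v w 1 3 + p v w 4 6 - p v w 5 7"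
  "AL v w [0,3,4,6] = p v w 0 1 + p v w 2 3 - p v w 4 5 - p v w 6 7"
  "AL v w [0,3,4,7] = - 1"
  "AL v w [0,3,5,6] = - 1"
  "AL v w [0,3,5,7] = - p v w 0 1 - p v w 2 3 + p v w 4 5 + p v w 6 7"
  "AL v w [0,3,6,7] = - p v w 0 2 + p v w 1 3 + p v w 4 6 - p v w 5 7"
  "AL v w [0,4,5,6] = - p v w 0 7 + p v w 1 6 - p v w 2 5 + p v w 3 4"
  "AL v w [0,4,5,7] = p v w 0 6 + p v w 1 7 - p v w 2 4 - p v w 3 5"
  "AL v w [0,4,6,7] = - p v w 0 5 + p v w 1 4 + p v w 2 7 - p v w 3 6"
  "AL v w [0,5,6,7] = p v w 0 4 + p v w 1 5 + p v w 2 6 + p v w 3 7"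
  "AL v w [Suc 0,2,3,4] = p v w 0 4 + p v w 1 5 + p v w 2 6 + p v w 3 7"
  "AL v w [Suc 0,2,3,5] = p v w 0 5 - p v w 1 4 - p v w 2 7 + p v w 3 6"
  "AL v w [Suc 0,2,3,6] = p v w 0 6 + p v w 1 7 - p v w 2 4 - p v w 3 5"
  "AL v w [Suc 0,2,3,7] = p v w 0 7 - p v w 1 6 + p v w 2 5 - p v w 3 4"
  "AL v w [Suc 0,2,4,5] = - p v w 0 2 + p v w 1 3 + p v w 4 6 - p v w 5 7"
  "AL v w [Suc 0,2,4,6] = p v w 0 1 + p v w 2 3 - p v w 4 5 - p v w 6 7"
  "AL v w [Suc 0,2,4,7] = - 1"
  "AL v w [Suc 0,2,5,6] = - 1"
  "AL v w [Suc 0,2,5,7] = - p v w 0 1 - p v w 2 3 + p v w 4 5 + p v w 6 7"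
  "AL v w [Suc 0,2,6,7] = - p v w 0 2 + p v w 1 3 + p v w 4 6 - p v w 5 7"
  "AL v w [Suc 0,3,4,5] = - p v w 0 3 - p v w 1 2 + p v w 4 7 + p v w 5 6"
  "AL v w [Suc 0,3,4,6] = 1"
  "AL v w [Suc 0,3,4,7] = p v w 0 1 + p v w 2 3 - p v w 4 5 - p v w 6 7"
  "AL v w [Suc 0,3,5,6] = p v w 0 1 + p v w 2 3 - p v w 4 5 - p v w 6 7"
  "AL v w [Suc 0,3,5,7] = - 1"
  "AL v w [Suc 0,3,6,7] = - p v w 0 3 - p v w 1 2 + p v w 4 7 + p v w 5 6"
  "AL v w [Suc 0,4,5,6] = - p v w 0 6 - p v w 1 7 + p v w 2 4 + p v w 3 5"
  "AL v w [Suc 0,4,5,7] = - p v w 0 7 + p v w 1 6 - p v w 2 5 + p v w 3 4"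
  "AL v w [Suc 0,4,6,7] = - p v w 0 4 - p v w 1 5 - p v w 2 6 - p v w 3 7"
  "AL v w [Suc 0,5,6,7] = - p v w 0 5 + p v w 1 4 + p v w 2 7 - p v w 3 6"
  "AL v w [2,3,4,5] = - 1"
  "AL v w [2,3,4,6] = - p v w 0 3 - p v w 1 2 + p v w 4 7 + p v w 5 6"
  "AL v w [2,3,4,7] = p v w 0 2 - p v w 1 3 - p v w 4 6 + p v w 5 7"
  "AL v w [2,3,5,6] = p v w 0 2 - p v w 1 3 - p v w 4 6 + p v w 5 7"
  "AL v w [2,3,5,7] = p v w 0 3 + p v w 1 2 - p v w 4 7 - p v w 5 6"
  "AL v w [2,3,6,7] = - 1"
  "AL v w [2,4,5,6] = p v w 0 5 - p v w 1 4 - p v w 2 7 + p v w 3 6"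
  "AL v w [2,4,5,7] = p v w 0 4 + p v w 1 5 + p v w 2 6 + p v w 3 7"
  "AL v w [2,4,6,7] = - p v w 0 7 + p v w 1 6 - p v w 2 5 + p v w 3 4"
  "AL v w [2,5,6,7] = - p v w 0 6 - p v w 1 7 + p v w 2 4 + p v w 3 5"
  "AL v w [3,4,5,6] = - p v w 0 4 - p v w 1 5 - p v w 2 6 - p v w 3 7"
  "AL v w [3,4,5,7] = p v w 0 5 - p v w 1 4 - p v w 2 7 + p v w 3 6"
  "AL v w [3,4,6,7] = p v w 0 6 + p v w 1 7 - p v w 2 4 - p v w 3 5"
  "AL v w [3,5,6,7] = - p v w 0 7 + p v w 1 6 - p v w 2 5 + p v w 3 4"
  "AL v w [4,5,6,7] = 1"
  by (simp_all add: AL_def form_add_def sigma7_def form_diff_def wedge_flat interior_alt dim8_lit Phi_cs PhiL_t evs cs_def p_def algebra_simps cong: sum_weak_cong)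



lemma sum_Pow_insert:
  assumes "a \<notin> A" "finite A"
  shows "sum f (Pow (insert a A)) = sum f (Pow A) + sum (\<lambda>I. f (insert a I)) (Pow A)"
proof -
  have inj: "inj_on (insert a) (Pow A)"
    using assms(1) unfolding inj_on_def by (metis PowD insert_ident subsetD)
  have disj: "Pow A \<inter> insert a ` Pow A = {}" using assms(1) by auto
  have "sum f (Pow (insert a A)) = sum f (Pow A \<union> insert a ` Pow A)" by (simp add: Pow_insert)
  also have "\<dots> = sum f (Pow A) + sum f (insert a ` Pow A)"
    using assms(2) disj by (intro sum.union_disjoint) auto
  also have "sum f (insert a ` Pow A) = sum (\<lambda>I. f (insert a I)) (Pow A)"
    using inj by (simp add: sum.reindex)
  finally show ?thesis .
qed

definition Lsq :: "(nat \<Rightarrow> real) \<Rightarrow> (nat \<Rightarrow> real) \<Rightarrow> real" where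
  "Lsq v w = (p v w 0 1 + p v w 2 3 - p v w 4 5 - p v w 6 7)\<^sup>2 + (p v w 0 2 - p v w 1 3 - p v w 4 6 + p v w 5 7)\<^sup>2 + (p v w 0 3 + p v w 1 2 - p v w 4 7 - p v w 5 6)\<^sup>2 + (p v w 0 4 + p v w 1 5 + p v w 2 6 + p v w 3 7)\<^sup>2 + (p v w 0 5 - p v w 1 4 - p v w 2 7 + p v w 3 6)\<^sup>2 + (p v w 0 6 + p v w 1 7 - p v w 2 4 - p v w 3 5)\<^sup>2 + (p v w 0 7 - p v w 1 6 + p v w 2 5 - p v w 3 4)\<^sup>2"

lemma alpha_cs: "form_add Phi_o (sigma7 v w) I = (if I \<subseteq> dim8 \<and> card I = 4 then AL v w (cs I) else 0)"
  unfolding AL_def using sup4_cs[OF sup4_alpha] .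

lemma main_dim8: "wedge (form_add Phi_o (sigma7 v w)) (form_add Phi_o (sigma7 v w)) dim8 = 14 + 8 * Lsq v w"
proof -
  have "wedge (form_add Phi_o (sigma7 v w)) (form_add Phi_o (sigma7 v w)) dim8 =
    (\<Sum>I\<in>Pow dim8. wedge_sign I (dim8 - I) * (if I \<subseteq> dim8 \<and> card I = 4 then AL v w (cs I) else 0)
        * (if dim8 - I \<subseteq> dim8 \<and> card (dim8 - I) = 4 then AL v w (cs (dim8 - I)) else 0))"
    unfolding wedge_def by (simp only: alpha_cs)
  also have "\<dots> = 14 + 8 * Lsq v w"
    unfolding dim8_lit
    apply (simp add: sum_Pow_insert wedge_sign_eq AL_t cs_def evs cong: sum_weak_cong)
    apply (unfold Lsq_def One_nat_def)
    apply algebra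
    done
  finally show ?thesis .
qed

lemma Lsq_nw: "Lsq v w = norm_wedge_sq v w"
  unfolding Lsq_def p_def norm_wedge_sq_def g_o_def dim8_lit
  by simp algebra

lemma sigma7_zero: "form_add Phi_o (sigma7 (\<lambda>_. 0) (\<lambda>_. 0)) = Phi_o"
proof -
  have f: "flat (\<lambda>_. 0) = (\<lambda>_. 0)" by (simp add: flat_def fun_eq_iff)
  have w: "wedge (\<lambda>_. 0) \<beta> = (\<lambda>_. 0)" for \<beta> by (simp add: wedge_def fun_eq_iff)
  show ?thesis by (simp add: sigma7_def f w form_diff_def form_add_def)
qed

lemma PhiPhi: "wedge Phi_o Phi_o dim8 = 14"
  using main_dim8[of "\<lambda>_. 0" "\<lambda>_. 0"] by (simp add: sigma7_zero Lsq_def p_def)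

theorem mainTheorem18:
  fixes v w :: "nat \<Rightarrow> real"
  shows "wedge (form_add Phi_o (sigma7 v w)) (form_add Phi_o (sigma7 v w))
         = form_scale (1 + 4/7 * norm_wedge_sq v w) (wedge Phi_o Phi_o)"
proof
  fix K
  show "wedge (form_add Phi_o (sigma7 v w)) (form_add Phi_o (sigma7 v w)) K
         = form_scale (1 + 4/7 * norm_wedge_sq v w) (wedge Phi_o Phi_o) K"
  proof (cases "K = dim8")
    case True
    then show ?thesis using main_dim8[of v w] PhiPhi Lsq_nw[of v w]
      by (simp add: form_scale_def algebra_simps)
  next
    case False
    have s1: "sup4 (wedge (form_add Phi_o (sigma7 v w)) (form_add Phi_o (sigma7 v w))) (4+4)"
      by (rule sup4_wedge[OF sup4_alpha sup4_alpha])
    have s2: "sup4 (wedge Phi_o Phi_o) (4+4)"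
      by (rule sup4_wedge[OF sup4_Phi sup4_Phi])
    have nK: "\<not> (K \<subseteq> dim8 \<and> card K = 4 + 4)"
      using False card_subset_eq[OF finite_dim8] card_dim8 by auto
    show ?thesis using s1 s2 nK unfolding sup4_alt form_scale_def by simp
  qed
qed

end
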